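(* Let $T>0$ and let $g:[0,T]\to\mathbb R$ be a right-continuous nondecreasing function such that $g(t)-g(t-)\le\frac12$ for all $t\in(0,T]$. Then the Kurzweil integral equation $$y(t)=1+\int_0^t y(\tau)\,\mathrm dg(\tau)\quad\forall t\in[0,T]$$ has a unique nondecreasing right-continuous solution $y:[0,T]\to[1,\infty)$, and $y(t)\le \mathrm e^{2(g(T)-g(0))}$ for all $t\in[0,T]$.
   Context: The integral is the Kurzweil integral: $J=\int_a^b f(t)\,\mathrm dg(t)$ if for every $\varepsilon>0$ there is a gauge $\delta:[a,b]\to(0,\infty)$ such that $|J-\sum_{j=1}^m f(\tau_j)(g(t_j)-g(t_{j-1}))|<\varepsilon$ for every partition $a=t_0<\dots<t_m=b$, $\tau_j\in[t_{j-1},t_j]$, with $[t_{j-1},t_j]\subset(\tau_j-\delta(\tau_j),\tau_j+\delta(\tau_j))$ for all $j$, $t_{j-1}<\tau_j$ for $j\ge2$, and $\tau_j<t_j$ for $j\le m-1$. $g(t-)$ denotes the left limit. *)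

theory Defs
  imports "HOL-Analysis.Analysis"
begin

definition kurzweil_fine ::
  "(real \<Rightarrow> real) \<Rightarrow> real \<Rightarrow> real \<Rightarrow> nat \<Rightarrow> (nat \<Rightarrow> real) \<Rightarrow> (nat \<Rightarrow> real) \<Rightarrow> bool" where
  "kurzweil_fine \<delta> a b m t \<tau> \<longleftrightarrow>
     t 0 = a \<and> t m = b \<and>
     (\<forall>j\<in>{1..m}. t (j - 1) < t j \<and> t (j - 1) \<le> \<tau> j \<and> \<tau> j \<le> t j \<and>
        \<tau> j - \<delta> (\<tau> j) < t (j - 1) \<and> t j < \<tau> j + \<delta> (\<tau> j)) \<and>
     (\<forall>j\<in>{2..m}. t (j - 1) < \<tau> j) \<and>
     (\<forall>j\<in>{1..m - 1}. \<tau> j < t j)"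

definition kurzweil_has_integral ::
  "(real \<Rightarrow> real) \<Rightarrow> (real \<Rightarrow> real) \<Rightarrow> real \<Rightarrow> real \<Rightarrow> real \<Rightarrow> bool" where
  "kurzweil_has_integral f g a b J \<longleftrightarrow>
     (\<forall>\<epsilon>>0. \<exists>\<delta>. (\<forall>s\<in>{a..b}. \<delta> s > 0) \<and>
        (\<forall>m t \<tau>. kurzweil_fine \<delta> a b m t \<tau> \<longrightarrow>
           \<bar>J - (\<Sum>j=1..m. f (\<tau> j) * (g (t j) - g (t (j - 1))))\<bar> < \<epsilon>))"

end

theory Submission
  imports Defs
begin


lemma kf_mono:
  assumes "kurzweil_fine \<delta> a b m t \<tau>" "i \<le> j" "j \<le> m"
  shows "t i \<le> t j"
  using assms(2,3)
proof (induction j)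
  case 0 then show ?case by simp
next
  case (Suc j)
  show ?case
  proof (cases "i = Suc j")
    case False
    then have "i \<le> j" using Suc by simp
    then have "t i \<le> t j" using Suc by simp
    moreover have "t j < t (Suc j)" using assms(1) Suc(3) unfolding kurzweil_fine_def
      by (metis atLeastAtMost_iff diff_Suc_1 le_add1 plus_1_eq_Suc)
    ultimately show ?thesis by simp
  qed simp
qed

lemma kf_range:
  assumes "kurzweil_fine \<delta> a b m t \<tau>" "j \<le> m"
  shows "a \<le> t j" "t j \<le> b"
  using kf_mono[OF assms(1), of 0 j] kf_mono[OF assms(1), of j m] assms
  unfolding kurzweil_fine_def by auto

lemma kf_tag:
  assumes "kurzweil_fine \<delta> a b m t \<tau>" "j \<in> {1..m}"
  shows "t (j-1) \<le> \<tau> j" "\<tau> j \<le> t j" "a \<le> \<tau> j" "\<tau> j \<le> b" "t (j-1) < t j"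
    "\<tau> j - \<delta> (\<tau> j) < t (j - 1)" "t j < \<tau> j + \<delta> (\<tau> j)"
proof -
  show 1: "t (j-1) \<le> \<tau> j" "\<tau> j \<le> t j" "t (j-1) < t j"
    "\<tau> j - \<delta> (\<tau> j) < t (j - 1)" "t j < \<tau> j + \<delta> (\<tau> j)"
    using assms unfolding kurzweil_fine_def by auto
  have "j - 1 \<le> m" using assms(2) by auto
  from kf_range(1)[OF assms(1) this] 1 show "a \<le> \<tau> j" by linarith
  show "\<tau> j \<le> b" using kf_range(2)[OF assms(1), of "j"] 1 assms(2) by auto
qed

lemma kf_gauge_mono:
  assumes "kurzweil_fine \<delta>' a b m t \<tau>" "\<forall>x\<in>{a..b}. \<delta>' x \<le> \<delta> x"
  shows "kurzweil_fine \<delta> a b m t \<tau>"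
proof -
  have "\<forall>j\<in>{1..m}. \<tau> j - \<delta> (\<tau> j) < t (j - 1) \<and> t j < \<tau> j + \<delta> (\<tau> j)"
  proof
    fix j assume j: "j \<in> {1..m}"
    have "\<delta>' (\<tau> j) \<le> \<delta> (\<tau> j)" using assms(2) kf_tag(3,4)[OF assms(1) j] by auto
    then show "\<tau> j - \<delta> (\<tau> j) < t (j - 1) \<and> t j < \<tau> j + \<delta> (\<tau> j)"
      using kf_tag(6,7)[OF assms(1) j] by linarith
  qed
  then show ?thesis using assms(1) unfolding kurzweil_fine_def by blast
qed

lemma telescope:
  fixes f :: "nat \<Rightarrow> real"
  shows "(\<Sum>j=1..m. f j - f (j-1)) = f m - f 0"
  by (induction m) (auto simp: sum.atLeast1_atMost_eq)

lemma kf_zero_len: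
  assumes "kurzweil_fine \<delta> a a m t \<tau>" shows "m = 0"
proof (rule ccontr)
  assume "m \<noteq> 0"
  then have "t 0 < t m" using kf_mono[OF assms, of 1 m] kf_tag(5)[OF assms, of 1] by auto
  then show False using assms unfolding kurzweil_fine_def by auto
qed

lemma kf_trivial: "kurzweil_fine \<delta> a a 0 (\<lambda>_. a) \<tau>"
  unfolding kurzweil_fine_def by auto

lemma kf_extend:
  assumes "kurzweil_fine \<delta> a x m t \<tau>" "m \<ge> 1" "x < y" "y < \<tau> m + \<delta> (\<tau> m)"
  shows "kurzweil_fine \<delta> a y m (t(m:=y)) \<tau>"
proof -
  have tm: "t m = x" using assms(1) unfolding kurzweil_fine_def by auto
  have mm: "m \<in> {1..m}" using assms(2) by auto
  note T = kf_tag[OF assms(1) mm]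
  note D = assms(1)[unfolded kurzweil_fine_def]
  have A: "\<forall>j\<in>{1..m}. (t(m:=y)) (j - 1) < (t(m:=y)) j \<and> (t(m:=y)) (j - 1) \<le> \<tau> j \<and> \<tau> j \<le> (t(m:=y)) j \<and>
        \<tau> j - \<delta> (\<tau> j) < (t(m:=y)) (j - 1) \<and> (t(m:=y)) j < \<tau> j + \<delta> (\<tau> j)"
  proof
    fix j assume j: "j \<in> {1..m}"
    show "(t(m:=y)) (j - 1) < (t(m:=y)) j \<and> (t(m:=y)) (j - 1) \<le> \<tau> j \<and> \<tau> j \<le> (t(m:=y)) j \<and>
        \<tau> j - \<delta> (\<tau> j) < (t(m:=y)) (j - 1) \<and> (t(m:=y)) j < \<tau> j + \<delta> (\<tau> j)"
    proof (cases "j = m")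
      case True
      then show ?thesis using T tm assms(3,4) j by auto
    next
      case False
      then show ?thesis using D j by auto
    qed
  qed
  have B: "\<forall>j\<in>{2..m}. (t(m:=y)) (j - 1) < \<tau> j" using D by auto
  have C: "\<forall>j\<in>{1..m - 1}. \<tau> j < (t(m:=y)) j" using D by auto
  show ?thesis unfolding kurzweil_fine_def using A B C D assms(2) by auto
qed

lemma kf_append:
  assumes "kurzweil_fine \<delta> a x m t \<tau>" "m \<ge> 1" "\<tau> m < x" "x < \<zeta>" "\<zeta> \<le> y"
    "\<zeta> - \<delta> \<zeta> < x" "y < \<zeta> + \<delta> \<zeta>"
  shows "kurzweil_fine \<delta> a y (Suc m) (t(Suc m:=y)) (\<tau>(Suc m := \<zeta>))"
proof -
  have tm: "t m = x" using assms(1) unfolding kurzweil_fine_def by auto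
  note D = assms(1)[unfolded kurzweil_fine_def]
  let ?t = "t(Suc m:=y)" and ?s = "\<tau>(Suc m := \<zeta>)"
  have A: "\<forall>j\<in>{1..Suc m}. ?t (j - 1) < ?t j \<and> ?t (j - 1) \<le> ?s j \<and> ?s j \<le> ?t j \<and>
        ?s j - \<delta> (?s j) < ?t (j - 1) \<and> ?t j < ?s j + \<delta> (?s j)"
  proof
    fix j assume j: "j \<in> {1..Suc m}"
    show "?t (j - 1) < ?t j \<and> ?t (j - 1) \<le> ?s j \<and> ?s j \<le> ?t j \<and>
        ?s j - \<delta> (?s j) < ?t (j - 1) \<and> ?t j < ?s j + \<delta> (?s j)"
    proof (cases "j = Suc m")
      case True
      then show ?thesis using tm assms(3-7) by auto
    next
      case False
      then have "j \<in> {1..m}" using j by auto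
      then show ?thesis using D False by auto
    qed
  qed
  have B: "\<forall>j\<in>{2..Suc m}. ?t (j - 1) < ?s j"
  proof
    fix j assume j: "j \<in> {2..Suc m}"
    show "?t (j - 1) < ?s j"
    proof (cases "j = Suc m")
      case True then show ?thesis using tm assms(4) by auto
    next
      case False then show ?thesis using D j by auto
    qed
  qed
  have C: "\<forall>j\<in>{1..Suc m - 1}. ?s j < ?t j"
  proof
    fix j assume j: "j \<in> {1..Suc m - 1}"
    show "?s j < ?t j"
    proof (cases "j = m")
      case True then show ?thesis using tm assms(3) by auto
    next
      case False then show ?thesis using D j by auto
    qed
  qed
  show ?thesis unfolding kurzweil_fine_def using A B C D by auto
qed

lemma kf_base:
  assumes "a < y" "y < a + \<delta> a"
  shows "kurzweil_fine \<delta> a y 1 (\<lambda>j. if j = 0 then a else y) (\<lambda>_. a)"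
  using assms unfolding kurzweil_fine_def by auto


lemma cousin:
  assumes ab: "a < b" and pos: "\<forall>x\<in>{a..b}. \<delta> x > 0"
  shows "\<exists>m t \<tau>. kurzweil_fine \<delta> a b m t \<tau>"
proof -
  define Fine where "Fine y \<longleftrightarrow> (\<exists>m t \<tau>. kurzweil_fine \<delta> a y m t \<tau>)" for y
  have m1: "m \<ge> 1" if "kurzweil_fine \<delta> a y m t \<tau>" "a < y" for y m t \<tau>
    using that kf_zero_len[of \<delta> a m t \<tau>] unfolding kurzweil_fine_def by (cases "m = 0") auto
  have ext: "\<exists>e>0. \<forall>z. y < z \<and> z < y + e \<longrightarrow> Fine z" if "Fine y" "a < y" "y \<le> b" for y
  proof -
    obtain m t \<tau> where P: "kurzweil_fine \<delta> a y m t \<tau>" using \<open>Fine y\<close> Fine_def by auto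
    have m: "m \<ge> 1" using m1[OF P \<open>a < y\<close>] .
    then have mm: "m \<in> {1..m}" by auto
    note T = kf_tag[OF P mm]
    have tm: "t m = y" using P unfolding kurzweil_fine_def by auto
    show ?thesis
    proof (intro exI[of _ "\<tau> m + \<delta> (\<tau> m) - y"] conjI allI impI)
      show "0 < \<tau> m + \<delta> (\<tau> m) - y" using T tm by auto
    next
      fix z assume "y < z \<and> z < y + (\<tau> m + \<delta> (\<tau> m) - y)"
      then show "Fine z" using kf_extend[OF P m, of z] unfolding Fine_def by auto
    qed
  qed
  have left: "Fine c" if "a < c" "c \<le> b" "\<forall>y\<in>{a<..<c}. Fine y" for c
  proof -
    have dc: "\<delta> c > 0" using pos that by auto
    define mx where "mx = max a (c - \<delta> c)"
    have mx1: "a \<le> mx" unfolding mx_def by simp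
    have mx2: "c - \<delta> c \<le> mx" unfolding mx_def by simp
    have mx3: "mx < c" unfolding mx_def using that(1) dc by simp
    note mx = mx1 mx2 mx3
    define x where "x = (mx + c) / 2"
    have x: "a < x" "x < c" "c - \<delta> c < x" using mx unfolding x_def by argo+
    have "Fine x" using that(3) x by auto
    then obtain m t \<tau> where P: "kurzweil_fine \<delta> a x m t \<tau>" unfolding Fine_def by auto
    have m: "m \<ge> 1" using m1[OF P \<open>a < x\<close>] .
    then have mm: "m \<in> {1..m}" by auto
    note T = kf_tag[OF P mm]
    have tm: "t m = x" using P unfolding kurzweil_fine_def by auto
    show ?thesis
    proof (cases "\<tau> m < x")
      case True
      have "kurzweil_fine \<delta> a c (Suc m) (t(Suc m := c)) (\<tau>(Suc m := c))"
        by (rule kf_append[OF P m True x(2) order_refl]) (use x dc in linarith)+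
      then show ?thesis unfolding Fine_def by blast
    next
      case False
      then have tx: "\<tau> m = x" using T tm by auto
      have dx: "\<delta> x > 0" using pos x that by auto
      define x' where "x' = min ((x + c) / 2) (x + \<delta> x / 2)"
      have x'a: "x' \<le> (x + c) / 2" "x' \<le> x + \<delta> x / 2"
        unfolding x'_def by (rule min.cobounded1, rule min.cobounded2)
      have h1: "x < (x+c)/2" using x(2) by simp
      have h2: "x < x + \<delta> x / 2" using dx by simp
      have x'1: "x < x'" unfolding x'_def using h1 h2 by simp
      have x'2: "x' < c" using x'a(1) x(2) by argo
      have x'3: "x' < \<tau> m + \<delta> (\<tau> m)" using x'a(2) tx dx by simp
      note x' = x'1 x'2 x'3
      have P': "kurzweil_fine \<delta> a x' m (t(m:=x')) \<tau>" using kf_extend[OF P m x'(1) x'(3)] .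
      have "kurzweil_fine \<delta> a c (Suc m) ((t(m:=x'))(Suc m := c)) (\<tau>(Suc m := c))"
        by (rule kf_append[OF P' m _ x'(2) order_refl]) (use x x' tx dc in linarith)+
      then show ?thesis unfolding Fine_def by blast
    qed
  qed
  define S where "S = {x\<in>{a..b}. \<forall>y\<in>{a<..x}. Fine y}"
  have Sb: "x \<le> b" if "x \<in> S" for x using that unfolding S_def by simp
  have aS: "a \<in> S" unfolding S_def using ab by simp
  have bdd: "bdd_above S" using Sb by (rule bdd_aboveI)
  define c where "c = Sup S"
  have ac: "a \<le> c" unfolding c_def using aS bdd by (rule cSup_upper)
  have cb: "c \<le> b" unfolding c_def using aS Sb by (intro cSup_least) auto
  have below: "Fine y" if "a < y" "y < c" for y
  proof -
    have "S \<noteq> {}" using aS by auto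
    from less_cSupD[OF this, of y] obtain x where "x \<in> S" "y < x" using \<open>y < c\<close> c_def by auto
    then show ?thesis using that unfolding S_def by simp
  qed
  have ca: "a < c"
  proof (rule ccontr)
    assume "\<not> a < c"
    then have c: "c = a" using ac by auto
    have da: "\<delta> a > 0" using pos ab by auto
    define y0 where "y0 = min b (a + \<delta> a / 2)"
    have y01: "y0 \<le> b" "y0 \<le> a + \<delta> a / 2" unfolding y0_def by simp_all
    have y02: "a < y0" unfolding y0_def using ab da by simp
    have "y0 \<in> S" unfolding S_def
    proof (intro CollectI conjI ballI)
      show "y0 \<in> {a..b}" using y01 y02 by simp
      fix y assume "y \<in> {a<..y0}"
      then have yy: "a < y" "y \<le> y0" by simp_all
      have "y < a + \<delta> a" using yy y01 da by argo
      then show "Fine y" using kf_base[of a y \<delta>] yy unfolding Fine_def by blast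
    qed
    then have "y0 \<le> c" using cSup_upper[OF _ bdd] c_def by auto
    then show False using c y02 by simp
  qed
  have Fc: "Fine c" using left[OF ca cb] below by auto
  have "c = b"
  proof (rule ccontr)
    assume "c \<noteq> b"
    then have cb': "c < b" using cb by auto
    obtain e where e: "e > 0" "\<forall>z. c < z \<and> z < c + e \<longrightarrow> Fine z" using ext[OF Fc ca cb] by auto
    define c' where "c' = min b (c + e / 2)"
    have c'1: "c' \<le> b" "c' \<le> c + e / 2" unfolding c'_def by simp_all
    have c'2: "c < c'" unfolding c'_def using cb' e by simp
    have "c' \<in> S" unfolding S_def
    proof (intro CollectI conjI ballI)
      show "c' \<in> {a..b}" using ca c'1 c'2 by simp
      fix y assume y: "y \<in> {a<..c'}"
      show "Fine y"
      proof (cases "y < c")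
        case True then show ?thesis using below y by auto
      next
        case False
        show ?thesis
        proof (cases "y = c")
          case True then show ?thesis using Fc by simp
        next
          case False
          then have yy: "c < y" "y \<le> c'" using y \<open>\<not> y < c\<close> by simp_all
          have "y < c + e" using yy c'1 e by argo
          then show ?thesis using e yy by blast
        qed
      qed
    qed
    then have "c' \<le> c" using cSup_upper[OF _ bdd] c_def by auto
    then show False using c'2 by simp
  qed
  then show ?thesis using Fc Fine_def by auto
qed


lemma kint_diff:
  assumes "kurzweil_has_integral f g a b A" "kurzweil_has_integral h g a b B"
  shows "kurzweil_has_integral (\<lambda>x. f x - h x) g a b (A - B)"
  unfolding kurzweil_has_integral_def
proof (intro allI impI)
  fix \<epsilon> :: real assume e: "\<epsilon> > 0"
  then have e2: "\<epsilon>/2 > 0" by simp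
  obtain \<delta>1 where d1: "\<forall>s\<in>{a..b}. \<delta>1 s > 0"
    "\<forall>m t \<tau>. kurzweil_fine \<delta>1 a b m t \<tau> \<longrightarrow> \<bar>A - (\<Sum>j=1..m. f (\<tau> j) * (g (t j) - g (t (j - 1))))\<bar> < \<epsilon>/2"
    using assms(1) e2 unfolding kurzweil_has_integral_def by blast
  obtain \<delta>2 where d2: "\<forall>s\<in>{a..b}. \<delta>2 s > 0"
    "\<forall>m t \<tau>. kurzweil_fine \<delta>2 a b m t \<tau> \<longrightarrow> \<bar>B - (\<Sum>j=1..m. h (\<tau> j) * (g (t j) - g (t (j - 1))))\<bar> < \<epsilon>/2"
    using assms(2) e2 unfolding kurzweil_has_integral_def by blast
  define \<delta> where "\<delta> s = min (\<delta>1 s) (\<delta>2 s)" for s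
  show "\<exists>\<delta>. (\<forall>s\<in>{a..b}. 0 < \<delta> s) \<and>
          (\<forall>m t \<tau>. kurzweil_fine \<delta> a b m t \<tau> \<longrightarrow>
             \<bar>A - B - (\<Sum>j = 1..m. (f (\<tau> j) - h (\<tau> j)) * (g (t j) - g (t (j - 1))))\<bar> < \<epsilon>)"
  proof (intro exI[of _ \<delta>] conjI allI impI)
    show "\<forall>s\<in>{a..b}. 0 < \<delta> s" using d1(1) d2(1) unfolding \<delta>_def by simp
    fix m t \<tau> assume P: "kurzweil_fine \<delta> a b m t \<tau>"
    have P1: "kurzweil_fine \<delta>1 a b m t \<tau>" by (rule kf_gauge_mono[OF P]) (simp add: \<delta>_def)
    have P2: "kurzweil_fine \<delta>2 a b m t \<tau>" by (rule kf_gauge_mono[OF P]) (simp add: \<delta>_def)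
    have "(\<Sum>j = 1..m. (f (\<tau> j) - h (\<tau> j)) * (g (t j) - g (t (j - 1)))) =
      (\<Sum>j=1..m. f (\<tau> j) * (g (t j) - g (t (j - 1)))) - (\<Sum>j=1..m. h (\<tau> j) * (g (t j) - g (t (j - 1))))"
      by (simp only: left_diff_distrib sum_subtractf)
    moreover have "\<bar>A - (\<Sum>j=1..m. f (\<tau> j) * (g (t j) - g (t (j - 1))))\<bar> < \<epsilon>/2"
      using d1(2) P1 by blast
    moreover have "\<bar>B - (\<Sum>j=1..m. h (\<tau> j) * (g (t j) - g (t (j - 1))))\<bar> < \<epsilon>/2"
      using d2(2) P2 by blast
    ultimately show "\<bar>A - B - (\<Sum>j = 1..m. (f (\<tau> j) - h (\<tau> j)) * (g (t j) - g (t (j - 1))))\<bar> < \<epsilon>"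
      by argo
  qed
qed

lemma kint_point:
  assumes "kurzweil_has_integral f g a a J" shows "J = 0"
proof -
  have *: "\<bar>J\<bar> < e" if "e > 0" for e
  proof -
    obtain \<delta> where "\<forall>m t \<tau>. kurzweil_fine \<delta> a a m t \<tau> \<longrightarrow> \<bar>J - (\<Sum>j=1..m. f (\<tau> j) * (g (t j) - g (t (j - 1))))\<bar> < e"
      using assms \<open>e > 0\<close> unfolding kurzweil_has_integral_def by blast
    from this[rule_format, OF kf_trivial] show ?thesis by simp
  qed
  have "\<bar>J\<bar> \<le> 0"
  proof (rule field_le_epsilon)
    fix e :: real assume "0 < e"
    from *[OF this] show "\<bar>J\<bar> \<le> 0 + e" by simp
  qed
  then show ?thesis by simp
qed

lemma kint_bound:
  assumes int: "kurzweil_has_integral w g 0 t J" and r: "0 \<le> r" "r \<le> c" "c \<le> t"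
    and mono: "mono_on {0..t} g" and M: "M \<ge> 0"
    and zero: "\<forall>x\<in>{0..t}. w x \<noteq> 0 \<longrightarrow> c \<le> x"
    and bound: "\<forall>x\<in>{c..t}. \<bar>w x\<bar> \<le> M"
    and rc: "r < c \<or> r = 0 \<or> w c = 0"
    and e: "e > 0"
  shows "\<bar>J\<bar> \<le> M * (g t - g r) + e"
proof -
  obtain \<delta> where dpos: "\<forall>s\<in>{0..t}. \<delta> s > 0" and
    dfine: "\<forall>m tt \<tau>. kurzweil_fine \<delta> 0 t m tt \<tau> \<longrightarrow> \<bar>J - (\<Sum>j=1..m. w (\<tau> j) * (g (tt j) - g (tt (j - 1))))\<bar> < e"
    using int e unfolding kurzweil_has_integral_def by blast
  show ?thesis
  proof (cases "t = 0")
    case True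
    then have "r = 0" using r by simp
    have "kurzweil_fine \<delta> 0 t 0 (\<lambda>_. 0) (\<lambda>_. 0)" using True kf_trivial[of \<delta> 0] by simp
    from dfine[rule_format, OF this] have "\<bar>J\<bar> < e" by simp
    then show ?thesis using True \<open>r = 0\<close> by simp
  next
    case False
    then have t0: "0 < t" using r by simp
    define \<delta>' where "\<delta>' x = (if c < x then min (\<delta> x) (x - c) else if x = c \<and> r < c then min (\<delta> x) (c - r) else \<delta> x)" for x
    have d'pos: "\<forall>x\<in>{0..t}. \<delta>' x > 0" using dpos unfolding \<delta>'_def by simp
    have d'le: "\<forall>x\<in>{0..t}. \<delta>' x \<le> \<delta> x" unfolding \<delta>'_def by simp
    obtain m tt \<tau> where P': "kurzweil_fine \<delta>' 0 t m tt \<tau>" using cousin[OF t0 d'pos] by blast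
    have P: "kurzweil_fine \<delta> 0 t m tt \<tau>" using kf_gauge_mono[OF P' d'le] .
    have close: "\<bar>J - (\<Sum>j=1..m. w (\<tau> j) * (g (tt j) - g (tt (j - 1))))\<bar> < e" using dfine P by blast
    have trm: "\<bar>w (\<tau> j) * (g (tt j) - g (tt (j - 1)))\<bar> \<le> M * (g (max (tt j) r) - g (max (tt (j-1)) r))"
      if j: "j \<in> {1..m}" for j
    proof -
      note TT = kf_tag[OF P' j]
      have jm: "j - 1 \<le> m" "j \<le> m" using j by auto
      have u0: "0 \<le> tt (j-1)" using kf_range(1)[OF P' jm(1)] .
      have vt: "tt j \<le> t" using kf_range(2)[OF P' jm(2)] .
      have uv: "tt (j-1) \<le> tt j" using TT(5) by simp
      have guv: "g (tt (j-1)) \<le> g (tt j)"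
        by (rule mono_onD[OF mono]) (use u0 vt uv in simp_all)
      have mA: "max (tt (j-1)) r \<in> {0..t}" using u0 r uv vt
        by (cases "tt (j-1) \<le> r") (simp_all add: max_def)
      have mB: "max (tt j) r \<in> {0..t}" using u0 r uv vt
        by (cases "tt j \<le> r") (simp_all add: max_def)
      have mC: "max (tt (j-1)) r \<le> max (tt j) r" using uv by (rule max.mono) simp
      have mx: "g (max (tt (j-1)) r) \<le> g (max (tt j) r)"
        by (rule mono_onD[OF mono mA mB mC])
      show ?thesis
      proof (cases "w (\<tau> j) = 0")
        case True then show ?thesis using mx M by simp
      next
        case False
        have ct: "c \<le> \<tau> j" using zero False TT(3,4) by auto
        have wM: "\<bar>w (\<tau> j)\<bar> \<le> M" using bound ct TT(4) by auto
        have ru: "r \<le> tt (j-1)"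
        proof (cases "c < \<tau> j")
          case True
          have "\<delta>' (\<tau> j) \<le> \<tau> j - c" unfolding \<delta>'_def using True by simp
          then show ?thesis using TT(6) r by argo
        next
          case False
          then have tc: "\<tau> j = c" using ct by simp
          then have "r < c \<or> r = 0" using rc \<open>w (\<tau> j) \<noteq> 0\<close> by auto
          then show ?thesis
          proof
            assume rc': "r < c"
            have "\<delta>' (\<tau> j) \<le> c - r" unfolding \<delta>'_def using tc rc' by simp
            then show ?thesis using TT(6) tc by argo
          next
            assume "r = 0" then show ?thesis using u0 by simp
          qed
        qed
        have "max (tt (j-1)) r = tt (j-1)" "max (tt j) r = tt j" using ru TT(5) by auto
        then have "M * (g (max (tt j) r) - g (max (tt (j-1)) r)) = M * (g (tt j) - g (tt (j-1)))" by simp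
        moreover have "\<bar>w (\<tau> j) * (g (tt j) - g (tt (j - 1)))\<bar> = \<bar>w (\<tau> j)\<bar> * (g (tt j) - g (tt (j - 1)))"
          using guv by (simp add: abs_mult)
        moreover have "\<bar>w (\<tau> j)\<bar> * (g (tt j) - g (tt (j - 1))) \<le> M * (g (tt j) - g (tt (j - 1)))"
          using wM guv by (intro mult_right_mono) auto
        ultimately show ?thesis by linarith
      qed
    qed
    have "\<bar>\<Sum>j=1..m. w (\<tau> j) * (g (tt j) - g (tt (j - 1)))\<bar> \<le> (\<Sum>j=1..m. \<bar>w (\<tau> j) * (g (tt j) - g (tt (j - 1)))\<bar>)"
      by (rule sum_abs)
    also have "\<dots> \<le> (\<Sum>j=1..m. M * (g (max (tt j) r) - g (max (tt (j-1)) r)))"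
      using trm by (rule sum_mono)
    also have "\<dots> = M * (\<Sum>j=1..m. g (max (tt j) r) - g (max (tt (j-1)) r))"
      by (simp add: sum_distrib_left)
    also have "\<dots> = M * (g (max (tt m) r) - g (max (tt 0) r))"
      using telescope[of "\<lambda>j. g (max (tt j) r)" m] by simp
    also have "\<dots> = M * (g t - g r)"
    proof -
      have "tt m = t" "tt 0 = 0" using P' unfolding kurzweil_fine_def by simp_all
      moreover have "max t r = t" "max 0 r = r" using r by simp_all
      ultimately show ?thesis by simp
    qed
    finally show ?thesis using close by linarith
  qed
qed


lemma left_lim:
  fixes g :: "real \<Rightarrow> real"
  assumes mono: "mono_on {0..T} g" and s: "0 < s" "s \<le> T"
  shows "Lim (at_left s) g = Sup (g ` {0..<s})"
    "\<forall>u\<in>{0..<s}. g u \<le> Lim (at_left s) g"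
    "Lim (at_left s) g \<le> g s"
    "\<forall>e>0. \<exists>u\<in>{0..<s}. Lim (at_left s) g - e < g u"
proof -
  define L where "L = Sup (g ` {0..<s})"
  have gs: "g u \<le> g s" if "u \<in> {0..<s}" for u
    by (rule mono_onD[OF mono]) (use that s in simp_all)
  have bdd: "bdd_above (g ` {0..<s})" using gs by (intro bdd_aboveI[of _ "g s"]) auto
  have ne: "g ` {0..<s} \<noteq> {}" using s by auto
  have up: "g u \<le> L" if "u \<in> {0..<s}" for u
    unfolding L_def using bdd that by (intro cSup_upper) auto
  have Ls: "L \<le> g s" unfolding L_def using ne gs by (intro cSup_least) auto
  have appr: "\<exists>u\<in>{0..<s}. a < g u" if "a < L" for a
  proof -
    from less_cSupD[OF ne, of a] that obtain v where "v \<in> g ` {0..<s}" "a < v" unfolding L_def by blast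
    then show ?thesis by auto
  qed
  have "(g \<longlongrightarrow> L) (at_left s)"
  proof (rule order_tendstoI)
    fix a assume "a < L"
    then obtain u where u: "u \<in> {0..<s}" "a < g u" using appr by blast
    have "eventually (\<lambda>x. x \<in> {u<..<s}) (at_left s)" using u by (intro eventually_at_left_real) simp
    then show "eventually (\<lambda>x. a < g x) (at_left s)"
    proof (rule eventually_mono)
      fix x assume x: "x \<in> {u<..<s}"
      have "g u \<le> g x" by (rule mono_onD[OF mono]) (use u x s in simp_all)
      then show "a < g x" using u by simp
    qed
  next
    fix a assume "L < a"
    have "eventually (\<lambda>x. x \<in> {0<..<s}) (at_left s)" using s by (intro eventually_at_left_real) simp
    then show "eventually (\<lambda>x. g x < a) (at_left s)"
    proof (rule eventually_mono)
      fix x assume x: "x \<in> {0<..<s}"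
      then have "g x \<le> L" using up by simp
      then show "g x < a" using \<open>L < a\<close> by simp
    qed
  qed
  then have LL: "Lim (at_left s) g = L" by (intro tendsto_Lim) simp_all
  show "Lim (at_left s) g = Sup (g ` {0..<s})" using LL L_def by simp
  show "\<forall>u\<in>{0..<s}. g u \<le> Lim (at_left s) g" using LL up by simp
  show "Lim (at_left s) g \<le> g s" using LL Ls by simp
  show "\<forall>e>0. \<exists>u\<in>{0..<s}. Lim (at_left s) g - e < g u"
  proof (intro allI impI)
    fix e :: real assume "e > 0"
    then have "L - e < L" by simp
    then show "\<exists>u\<in>{0..<s}. Lim (at_left s) g - e < g u" using appr LL by simp
  qed
qed

lemma uniq_core:
  fixes g w :: "real \<Rightarrow> real"
  assumes mono: "mono_on {0..T} g"
    and rc: "\<forall>t\<in>{0..<T}. continuous (at_right t) g"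
    and jump: "\<forall>t\<in>{0<..T}. g t - Lim (at_left t) g \<le> 1/2"
    and int: "\<forall>t\<in>{0..T}. kurzweil_has_integral w g 0 t (w t)"
    and bnd: "\<forall>x\<in>{0..T}. \<bar>w x\<bar> \<le> B"
    and T: "0 \<le> T"
  shows "\<forall>x\<in>{0..T}. w x = 0"
proof (rule ccontr)
  assume "\<not> (\<forall>x\<in>{0..T}. w x = 0)"
  define S where "S = {x\<in>{0..T}. w x \<noteq> 0}"
  have Sne: "S \<noteq> {}" using \<open>\<not> (\<forall>x\<in>{0..T}. w x = 0)\<close> S_def by auto
  have Slow: "0 \<le> x" if "x \<in> S" for x using that S_def by simp
  have bddS: "bdd_below S" using Slow by (intro bdd_belowI) 
  define c where "c = Inf S"
  have c0: "0 \<le> c" unfolding c_def using Sne Slow by (intro cInf_greatest) auto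
  have cle: "c \<le> x" if "x \<in> S" for x unfolding c_def using bddS that by (intro cInf_lower)
  obtain x0 where x0: "x0 \<in> S" using Sne by auto
  have cT: "c \<le> T" using cle[OF x0] x0 S_def by simp
  have before: "w x = 0" if "x \<in> {0..T}" "x < c" for x
  proof (rule ccontr)
    assume "w x \<noteq> 0"
    then have "x \<in> S" using that S_def by simp
    then show False using cle[OF \<open>x \<in> S\<close>] that(2) by simp
  qed
  have monoc: "mono_on {0..t} g" if "t \<le> T" for t
    by (rule mono_on_subset[OF mono]) (use that in auto)
  have wc: "w c = 0"
  proof (cases "c = 0")
    case True
    have "kurzweil_has_integral w g 0 0 (w 0)" using int T by simp
    then show ?thesis using kint_point[of w g 0 "w 0"] True by simp
  next
    case False
    then have cpos: "0 < c" using c0 by simp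
    note LL = left_lim[OF mono cpos cT]
    have "g c - Lim (at_left c) g \<le> 1/2" using jump cpos cT by simp
    have "\<exists>u\<in>{0..<c}. Lim (at_left c) g - 1/4 < g u" using LL(4) by simp
    then obtain r where r: "r \<in> {0..<c}" "Lim (at_left c) g - 1/4 < g r" by blast
    have gr: "g c - g r \<le> 3/4" using r \<open>g c - Lim (at_left c) g \<le> 1/2\<close> by argo
    have key: "\<bar>w c\<bar> \<le> \<bar>w c\<bar> * (g c - g r) + e" if "e > 0" for e
    proof (rule kint_bound[where c = c and w = w and t = c and r = r and M = "\<bar>w c\<bar>" and g = g])
      show "kurzweil_has_integral w g 0 c (w c)" using int c0 cT by simp
      show "0 \<le> r" "r \<le> c" using r by simp_all
      show "c \<le> c" by simp
      show "mono_on {0..c} g" using monoc cT by simp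
      show "\<bar>w c\<bar> \<ge> 0" by simp
      show "\<forall>x\<in>{0..c}. w x \<noteq> 0 \<longrightarrow> c \<le> x"
      proof (intro ballI impI)
        fix x assume "x \<in> {0..c}" "w x \<noteq> 0"
        then show "c \<le> x" using before[of x] cT by (cases "x < c") auto
      qed
      show "\<forall>x\<in>{c..c}. \<bar>w x\<bar> \<le> \<bar>w c\<bar>" by simp
      show "r < c \<or> r = 0 \<or> w c = 0" using r by simp
      show "e > 0" using that .
    qed
    have "\<bar>w c\<bar> * (g c - g r) \<le> \<bar>w c\<bar> * (3/4)" using gr by (intro mult_left_mono) simp_all
    then have h: "\<bar>w c\<bar> \<le> \<bar>w c\<bar> * (3/4) + e" if "e > 0" for e using key[OF that] by linarith
    from h have "\<bar>w c\<bar> \<le> \<bar>w c\<bar> * (3/4)" by (rule field_le_epsilon)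
    then show ?thesis by simp
  qed
  have cltT: "c < T"
  proof (rule ccontr)
    assume "\<not> c < T"
    then have "c = T" using cT by simp
    then have "x0 = c" using cle[OF x0] x0 S_def by simp
    then show False using wc x0 S_def by simp
  qed
  have "(g \<longlongrightarrow> g c) (at_right c)" using rc c0 cltT by (simp add: continuous_within)
  then have "eventually (\<lambda>x. dist (g x) (g c) < 1/2) (at_right c)"
    by (rule tendstoD) simp
  then obtain b where b: "b > c" "\<forall>y>c. y < b \<longrightarrow> dist (g y) (g c) < 1/2"
    unfolding eventually_at_right_field by blast
  obtain t1 where t1: "c < t1" "t1 \<le> T" "t1 < b"
  proof (cases "T < b")
    case True then show ?thesis using that[of T] cltT by simp
  next
    case False
    have "c < (c + b)/2" "(c+b)/2 < b" using b(1) by simp_all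
    then show ?thesis using that[of "(c+b)/2"] False by simp
  qed
  have gt1: "g y - g c \<le> 1/2" if "y \<in> {c<..t1}" for y
  proof -
    have "dist (g y) (g c) < 1/2" using b(2) that t1 by simp
    then have "\<bar>g y - g c\<bar> < 1/2" by (simp add: dist_real_def)
    then show ?thesis by argo
  qed
  define M where "M = Sup ((\<lambda>x. \<bar>w x\<bar>) ` {c..t1})"
  have bddM: "bdd_above ((\<lambda>x. \<bar>w x\<bar>) ` {c..t1})"
    using bnd c0 t1 by (intro bdd_aboveI[of _ B]) auto
  have neM: "(\<lambda>x. \<bar>w x\<bar>) ` {c..t1} \<noteq> {}" using t1 by auto
  have wM: "\<bar>w x\<bar> \<le> M" if "x \<in> {c..t1}" for x
    unfolding M_def using bddM that by (intro cSup_upper) auto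
  have cc: "c \<in> {c..t1}" using t1 by simp
  have M0: "M \<ge> 0" using wM[OF cc] abs_ge_zero[of "w c"] by linarith
  have half: "\<bar>w x\<bar> \<le> M / 2" if x: "x \<in> {c..t1}" for x
  proof (cases "x = c")
    case True then show ?thesis using wc M0 by simp
  next
    case False
    then have xc: "c < x" using x by simp
    have gx: "g x - g c \<le> 1/2" using gt1 x xc by simp
    have key: "\<bar>w x\<bar> \<le> M * (g x - g c) + e" if "e > 0" for e
    proof (rule kint_bound[where c = c and w = w and t = x and r = c and M = M and g = g])
      show "kurzweil_has_integral w g 0 x (w x)" using int c0 x t1 by simp
      show "0 \<le> c" "c \<le> c" using c0 by simp_all
      show "c \<le> x" using xc by simp
      show "mono_on {0..x} g" using monoc x t1 by simp
      show "M \<ge> 0" using M0 .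
      show "\<forall>y\<in>{0..x}. w y \<noteq> 0 \<longrightarrow> c \<le> y"
      proof (intro ballI impI)
        fix y assume "y \<in> {0..x}" "w y \<noteq> 0"
        then show "c \<le> y" using before[of y] x t1 by (cases "y < c") auto
      qed
      show "\<forall>y\<in>{c..x}. \<bar>w y\<bar> \<le> M" using wM x by simp
      show "c < c \<or> c = 0 \<or> w c = 0" using wc by simp
      show "e > 0" using that .
    qed
    have "M * (g x - g c) \<le> M * (1/2)" using gx M0 by (intro mult_left_mono) simp_all
    moreover have "M * (1/2) = M / 2" by simp
    ultimately have h: "\<bar>w x\<bar> \<le> M / 2 + e" if "e > 0" for e using key[OF that] by linarith
    from h show "\<bar>w x\<bar> \<le> M / 2" by (rule field_le_epsilon)
  qed
  have "Sup ((\<lambda>x. \<bar>w x\<bar>) ` {c..t1}) \<le> M / 2" by (rule cSup_least[OF neM]) (use half in auto)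
  then have "M \<le> M / 2" using M_def by simp
  then have "M \<le> 0" by simp
  have "Inf S < t1" using t1 c_def by simp
  then obtain x where x: "x \<in> S" "x < t1" using cInf_less_iff[OF Sne bddS] by blast
  then have "x \<in> {c..t1}" using cle by simp
  then have "\<bar>w x\<bar> \<le> 0" using wM[OF \<open>x \<in> {c..t1}\<close>] \<open>M \<le> 0\<close> by linarith
  then show False using x S_def by simp
qed


definition jmp :: "(real \<Rightarrow> real) \<Rightarrow> real \<Rightarrow> real" where
  "jmp g s = g s - Lim (at_left s) g"

definition phi :: "real \<Rightarrow> real" where
  "phi x = - ln (1 - x) - x"

definition Hf :: "(real \<Rightarrow> real) \<Rightarrow> real \<Rightarrow> real" where
  "Hf g t = infsum (\<lambda>s. phi (jmp g s)) {0<..t}"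

lemma phi_bounds:
  assumes "0 \<le> x" "x \<le> 1/2"
  shows "0 \<le> phi x" "phi x \<le> 2 * x\<^sup>2" "phi x \<le> x"
proof -
  have "ln (1 - x) \<le> (1 - x) - 1" using assms by (intro ln_le_minus_one) simp
  then show "0 \<le> phi x" unfolding phi_def by simp
  have "- x - 2 * x\<^sup>2 \<le> ln (1 - x)" using ln_one_minus_pos_lower_bound[OF assms] .
  then show 2: "phi x \<le> 2 * x\<^sup>2" unfolding phi_def by simp
  have "x * (2 * x) \<le> x * 1" using assms by (intro mult_left_mono) simp_all
  moreover have "2 * x\<^sup>2 = x * (2 * x)" by (simp add: power2_eq_square)
  ultimately have "2 * x\<^sup>2 \<le> x" by simp
  then show "phi x \<le> x" using 2 by simp
qed

locale jsetup =
  fixes g :: "real \<Rightarrow> real" and T :: real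
  assumes mono: "mono_on {0..T} g"
    and jump: "\<forall>t\<in>{0<..T}. g t - Lim (at_left t) g \<le> 1/2"
begin

lemma jmp_bounds:
  assumes "0 < s" "s \<le> T"
  shows "0 \<le> jmp g s" "jmp g s \<le> 1/2"
  using left_lim(3)[OF mono assms] jump assms unfolding jmp_def by auto

lemma gl_ge:
  assumes "0 \<le> u" "u < s" "s \<le> T"
  shows "g u \<le> Lim (at_left s) g"
  using left_lim(2)[OF mono _ assms(3)] assms by simp

lemma jmp_le:
  assumes "0 \<le> u" "u < s" "s \<le> T"
  shows "jmp g s \<le> g s - g u"
  using gl_ge[OF assms] unfolding jmp_def by simp

lemma jsum_open:
  assumes "finite F"
  shows "\<forall>a b. 0 \<le> a \<and> a < b \<and> b \<le> T \<and> F \<subseteq> {a<..<b} \<longrightarrow> sum (jmp g) F \<le> Lim (at_left b) g - g a"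
  using assms
proof (induction F rule: finite_linorder_max_induct)
  case empty
  show ?case
  proof (intro allI impI)
    fix a b assume ab: "0 \<le> a \<and> a < b \<and> b \<le> T \<and> {} \<subseteq> {a<..<b}"
    then show "sum (jmp g) {} \<le> Lim (at_left b) g - g a" using gl_ge[of a b] by simp
  qed
next
  case (insert m A)
  show ?case
  proof (intro allI impI)
    fix a b assume ab: "0 \<le> a \<and> a < b \<and> b \<le> T \<and> insert m A \<subseteq> {a<..<b}"
    then have m: "a < m" "m < b" by auto
    have A: "A \<subseteq> {a<..<m}" using ab insert.hyps(2) by auto
    have IH: "sum (jmp g) A \<le> Lim (at_left m) g - g a" using insert.IH ab m A by simp
    have mA: "m \<notin> A" using insert.hyps(2) by auto
    have "sum (jmp g) (insert m A) = jmp g m + sum (jmp g) A" using insert.hyps(1) mA by simp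
    also have "\<dots> \<le> g m - g a" using IH unfolding jmp_def by simp
    also have "g m \<le> Lim (at_left b) g" using gl_ge[of m b] m ab by simp
    finally show "sum (jmp g) (insert m A) \<le> Lim (at_left b) g - g a" by simp
  qed
qed

lemma jsum_closed:
  assumes "finite F" "0 \<le> a" "a \<le> b" "b \<le> T" "F \<subseteq> {a<..b}"
  shows "sum (jmp g) F \<le> g b - g a"
proof (cases "a = b")
  case True then show ?thesis using assms by simp
next
  case False
  then have ab: "a < b" using assms by simp
  have F': "F - {b} \<subseteq> {a<..<b}" using assms by auto
  have s1: "sum (jmp g) (F - {b}) \<le> Lim (at_left b) g - g a"
    using jsum_open[of "F - {b}"] assms ab F' by simp
  have jb: "0 \<le> jmp g b" using jmp_bounds[of b] ab assms by simp
  show ?thesis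
  proof (cases "b \<in> F")
    case True
    then have "sum (jmp g) F = jmp g b + sum (jmp g) (F - {b})" using assms(1) by (simp add: sum.remove)
    then show ?thesis using s1 unfolding jmp_def by simp
  next
    case False
    then have "F - {b} = F" by simp
    then show ?thesis using s1 left_lim(3)[OF mono _ assms(4)] ab assms by simp
  qed
qed

definition f where "f s = phi (jmp g s)"

lemma f_nonneg: "s \<in> {0<..T} \<Longrightarrow> 0 \<le> f s"
  unfolding f_def using phi_bounds(1) jmp_bounds by simp

lemma f_le_jmp: "s \<in> {0<..T} \<Longrightarrow> f s \<le> jmp g s"
  unfolding f_def using phi_bounds(3) jmp_bounds by simp

lemma f_sq: "s \<in> {0<..T} \<Longrightarrow> f s \<le> 2 * (jmp g s)\<^sup>2"
  unfolding f_def using phi_bounds(2) jmp_bounds by simp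

lemma f_summable: "0 \<le> T \<Longrightarrow> f summable_on {0<..T}"
proof (rule nonneg_bdd_above_summable_on)
  show "\<And>x. x \<in> {0<..T} \<Longrightarrow> 0 \<le> f x" using f_nonneg by simp
  assume T: "0 \<le> T"
  show "bdd_above (sum f ` {F. F \<subseteq> {0<..T} \<and> finite F})"
  proof (rule bdd_aboveI[of _ "g T - g 0"])
    fix v assume "v \<in> sum f ` {F. F \<subseteq> {0<..T} \<and> finite F}"
    then obtain F where F: "F \<subseteq> {0<..T}" "finite F" "v = sum f F" by auto
    have "sum f F \<le> sum (jmp g) F" using F f_le_jmp by (intro sum_mono) auto
    also have "\<dots> \<le> g T - g 0" using jsum_closed[OF F(2) _ T _ F(1)] by simp
    finally show "v \<le> g T - g 0" using F by simp
  qed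
qed

lemma f_summable_sub: "0 \<le> T \<Longrightarrow> A \<subseteq> {0<..T} \<Longrightarrow> f summable_on A"
  using f_summable summable_on_subset_banach by blast

lemma Hf_eq: "Hf g t = infsum f {0<..t}"
  unfolding Hf_def f_def by simp

lemma H_split:
  assumes "0 \<le> u" "u \<le> v" "v \<le> T"
  shows "Hf g v = Hf g u + infsum f {u<..v}"
proof -
  have "{0<..v} = {0<..u} \<union> {u<..v}" using assms by auto
  moreover have "f summable_on {0<..u}" "f summable_on {u<..v}"
    using assms by (auto intro!: f_summable_sub)
  ultimately show ?thesis unfolding Hf_eq using infsum_Un_disjoint[of f "{0<..u}" "{u<..v}"] by auto
qed

lemma H_inc:
  assumes "0 \<le> u" "u \<le> v" "v \<le> T"
  shows "0 \<le> infsum f {u<..v}" "infsum f {u<..v} \<le> 2 * (g v - g u)\<^sup>2"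
proof -
  show "0 \<le> infsum f {u<..v}" using assms f_nonneg by (intro infsum_nonneg) auto
  define D where "D = g v - g u"
  show "infsum f {u<..v} \<le> 2 * (g v - g u)\<^sup>2"
  proof (rule infsum_le_finite_sums)
    show "f summable_on {u<..v}" using assms by (auto intro!: f_summable_sub)
    fix F assume F: "finite F" "F \<subseteq> {u<..v}"
    have "sum f F \<le> sum (\<lambda>s. 2 * D * jmp g s) F"
    proof (rule sum_mono)
      fix s assume s: "s \<in> F"
      then have s': "u < s" "s \<le> v" using F by auto
      have j0: "0 \<le> jmp g s" using jmp_bounds[of s] s' assms by simp
      have jD: "jmp g s \<le> D" using jmp_le[of u s] s' assms unfolding D_def
        using mono_onD[OF mono, of s v] by simp
      have "f s \<le> 2 * (jmp g s)\<^sup>2" using f_sq s' assms by simp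
      also have "\<dots> = 2 * jmp g s * jmp g s" by (simp add: power2_eq_square)
      also have "\<dots> \<le> 2 * D * jmp g s" using j0 jD by (intro mult_right_mono) simp_all
      finally show "f s \<le> 2 * D * jmp g s" .
    qed
    also have "\<dots> = 2 * D * sum (jmp g) F" by (simp add: sum_distrib_left)
    also have "\<dots> \<le> 2 * D * D"
    proof (rule mult_left_mono)
      show "sum (jmp g) F \<le> D" unfolding D_def using jsum_closed[OF F(1) assms F(2)] .
      show "0 \<le> 2 * D" unfolding D_def using mono_onD[OF mono, of u v] assms by simp
    qed
    finally have "sum f F \<le> 2 * D * D" .
    moreover have "2 * D * D = 2 * (g v - g u)\<^sup>2" unfolding D_def power2_eq_square by (rule mult.assoc)
    ultimately show "sum f F \<le> 2 * (g v - g u)\<^sup>2" by simp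
  qed
qed

lemma H_left:
  assumes "0 \<le> u" "u < s" "s \<le> T"
  shows "infsum f {u<..s} = f s + infsum f {u<..<s}"
    "0 \<le> infsum f {u<..<s}"
    "infsum f {u<..<s} \<le> 2 * (Lim (at_left s) g - g u)\<^sup>2"
proof -
  have sm: "f summable_on {u<..<s}" using assms by (auto intro!: f_summable_sub)
  have "{u<..s} = insert s {u<..<s}" using assms by auto
  then show "infsum f {u<..s} = f s + infsum f {u<..<s}" using infsum_insert[OF sm] by simp
  show "0 \<le> infsum f {u<..<s}" using assms f_nonneg by (intro infsum_nonneg) auto
  define D where "D = Lim (at_left s) g - g u"
  show "infsum f {u<..<s} \<le> 2 * (Lim (at_left s) g - g u)\<^sup>2"
  proof (rule infsum_le_finite_sums[OF sm])
    fix F assume F: "finite F" "F \<subseteq> {u<..<s}"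
    have "sum f F \<le> sum (\<lambda>x. 2 * D * jmp g x) F"
    proof (rule sum_mono)
      fix x assume x: "x \<in> F"
      then have x': "u < x" "x < s" using F by auto
      have j0: "0 \<le> jmp g x" using jmp_bounds[of x] x' assms by simp
      have "g x \<le> Lim (at_left s) g" using gl_ge[of x s] x' assms by simp
      then have jD: "jmp g x \<le> D" using jmp_le[of u x] x' assms unfolding D_def by simp
      have "f x \<le> 2 * (jmp g x)\<^sup>2" using f_sq x' assms by simp
      also have "\<dots> = 2 * jmp g x * jmp g x" by (simp add: power2_eq_square)
      also have "\<dots> \<le> 2 * D * jmp g x" using j0 jD by (intro mult_right_mono) simp_all
      finally show "f x \<le> 2 * D * jmp g x" .
    qed
    also have "\<dots> = 2 * D * sum (jmp g) F" by (simp add: sum_distrib_left)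
    also have "\<dots> \<le> 2 * D * D"
    proof (rule mult_left_mono)
      show "sum (jmp g) F \<le> D" unfolding D_def using jsum_open[OF F(1)] F(2) assms by simp
      show "0 \<le> 2 * D" unfolding D_def using gl_ge[OF assms] by simp
    qed
    finally have "sum f F \<le> 2 * D * D" .
    moreover have "2 * D * D = 2 * (Lim (at_left s) g - g u)\<^sup>2" unfolding D_def power2_eq_square by (rule mult.assoc)
    ultimately show "sum f F \<le> 2 * (Lim (at_left s) g - g u)\<^sup>2" by simp
  qed
qed

lemma H_total:
  assumes "0 \<le> t" "t \<le> T"
  shows "0 \<le> Hf g t" "Hf g t \<le> g t - g 0"
proof -
  show "0 \<le> Hf g t" unfolding Hf_eq using f_nonneg assms by (intro infsum_nonneg) auto
  show "Hf g t \<le> g t - g 0" unfolding Hf_eq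
  proof (rule infsum_le_finite_sums)
    show "f summable_on {0<..t}" using assms by (auto intro!: f_summable_sub)
    fix F assume F: "finite F" "F \<subseteq> {0<..t}"
    have "sum f F \<le> sum (jmp g) F" using F f_le_jmp assms by (intro sum_mono) auto
    also have "\<dots> \<le> g t - g 0" using jsum_closed[OF F(1) _ assms(1) assms(2) F(2)] by simp
    finally show "sum f F \<le> g t - g 0" .
  qed
qed

end


lemma right_arith:
  fixes D h :: real
  assumes "0 \<le> D" "D \<le> 1/3" "0 \<le> h" "h \<le> 2 * D\<^sup>2"
  shows "0 \<le> exp (D + h) - 1 - D" "exp (D + h) - 1 - D \<le> 5 * D\<^sup>2"
proof -
  define x where "x = D + h"
  have DD: "D * D \<le> D * (1/3)" using assms by (intro mult_left_mono) simp_all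
  have x0: "0 \<le> x" using assms x_def by simp
  have x1: "x \<le> 5/3 * D" using assms DD unfolding x_def by (simp add: power2_eq_square)
  have x2: "x \<le> 1" using x1 assms by simp
  have "1 + x \<le> exp x" by (rule exp_ge_add_one_self)
  then show "0 \<le> exp (D + h) - 1 - D" using assms unfolding x_def by linarith
  have e: "exp x \<le> 1 + x + x\<^sup>2" using exp_bound[OF x0 x2] .
  have "x\<^sup>2 \<le> (5/3 * D)\<^sup>2" using x0 x1 by (intro power_mono) simp_all
  then have "x\<^sup>2 \<le> 25/9 * D\<^sup>2" by (simp add: power2_eq_square)
  then show "exp (D + h) - 1 - D \<le> 5 * D\<^sup>2" using e assms unfolding x_def by simp
qed

lemma left_arith:
  fixes \<Delta> d k :: real
  assumes "0 \<le> \<Delta>" "\<Delta> \<le> 1/2" "0 \<le> d" "d \<le> 1/3" "0 \<le> k" "k \<le> 2 * d\<^sup>2"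
  shows "\<bar>1 - \<Delta> - d - (1 - \<Delta>) * exp (- (d + k))\<bar> \<le> 5 * d * (d + \<Delta>)"
proof -
  define x where "x = d + k"
  define q where "q = 1 - exp (- x)"
  have DD: "d * d \<le> d * (1/3)" using assms by (intro mult_left_mono) simp_all
  have x0: "0 \<le> x" using assms x_def by simp
  have x1: "x \<le> 5/3 * d" using assms DD unfolding x_def by (simp add: power2_eq_square)
  have "1 + (- x) \<le> exp (- x)" by (rule exp_ge_add_one_self)
  then have qx: "q \<le> x" unfolding q_def by simp
  have q0: "0 \<le> q" unfolding q_def using x0 by simp
  have ex: "1 + x \<le> exp x" by (rule exp_ge_add_one_self)
  have "exp (- x) = 1 / exp x" by (simp add: exp_minus field_simps)
  also have "\<dots> \<le> 1 / (1 + x)" using ex x0 by (intro divide_left_mono) simp_all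
  also have "\<dots> \<le> 1 - x + x\<^sup>2"
  proof -
    have "1 \<le> (1 - x + x\<^sup>2) * (1 + x)" using x0 by (simp add: algebra_simps power2_eq_square power3_eq_cube)
    then show ?thesis using x0 by (simp add: field_simps)
  qed
  finally have qlow: "x - x\<^sup>2 \<le> q" unfolding q_def by simp
  have "x\<^sup>2 \<le> (5/3 * d)\<^sup>2" using x0 x1 by (intro power_mono) simp_all
  then have x2: "x\<^sup>2 \<le> 25/9 * d\<^sup>2" by (simp add: power2_eq_square)
  have "\<Delta> * q \<le> \<Delta> * (5/3 * d)" using qx x1 assms by (intro mult_left_mono) simp_all
  moreover have "0 \<le> \<Delta> * q" using assms q0 by simp
  moreover have "1 - \<Delta> - d - (1 - \<Delta>) * exp (- (d + k)) = (q - d) - \<Delta> * q"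
    unfolding q_def x_def by (simp add: algebra_simps)
  moreover have "q - d \<le> k" using qx x_def by simp
  moreover have "k - x\<^sup>2 \<le> q - d" using qlow x_def by simp
  ultimately have "\<bar>1 - \<Delta> - d - (1 - \<Delta>) * exp (- (d + k))\<bar> \<le> k + x\<^sup>2 + \<Delta> * (5/3 * d)"
    using assms by (simp add: abs_le_iff) 
  also have "\<dots> \<le> 2 * d\<^sup>2 + 25/9 * d\<^sup>2 + \<Delta> * (5/3 * d)" using x2 assms by simp
  also have "\<dots> \<le> 5 * d * (d + \<Delta>)"
  proof -
    have a: "0 \<le> d * d" "0 \<le> \<Delta> * d" using assms by simp_all
    have e1: "2 * d\<^sup>2 + 25/9 * d\<^sup>2 + \<Delta> * (5/3 * d) = 43/9 * (d * d) + 5/3 * (\<Delta> * d)"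
      by (simp add: power2_eq_square algebra_simps)
    have e2: "5 * d * (d + \<Delta>) = 5 * (d * d) + 5 * (\<Delta> * d)" by (simp add: algebra_simps)
    show ?thesis unfolding e1 e2 using a by argo
  qed
  finally show ?thesis .
qed


context jsetup
begin

definition yf where "yf t = exp (g t - g 0 + Hf g t)"

definition Yb where "Yb = exp (2 * (g T - g 0))"

lemma H0: "Hf g 0 = 0" unfolding Hf_def by simp

lemma yf0: "yf 0 = 1" unfolding yf_def H0 by simp

lemma g_mono: "0 \<le> u \<Longrightarrow> u \<le> v \<Longrightarrow> v \<le> T \<Longrightarrow> g u \<le> g v"
  by (rule mono_onD[OF mono]) simp_all

lemma yf_ge1: "0 \<le> t \<Longrightarrow> t \<le> T \<Longrightarrow> 1 \<le> yf t"
  unfolding yf_def using H_total[of t] g_mono[of 0 t] by simp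

lemma yf_le: "0 \<le> t \<Longrightarrow> t \<le> T \<Longrightarrow> yf t \<le> Yb"
  unfolding yf_def Yb_def using H_total[of t] g_mono[of t T] by simp

lemma yf_pos: "0 < yf t" unfolding yf_def by simp

lemma yf_mono: "mono_on {0..T} yf"
proof (rule mono_onI)
  fix u v assume uv: "u \<in> {0..T}" "v \<in> {0..T}" "u \<le> v"
  have "Hf g v = Hf g u + infsum f {u<..v}" using H_split[of u v] uv by simp
  moreover have "0 \<le> infsum f {u<..v}" using H_inc(1)[of u v] uv by simp
  moreover have "g u \<le> g v" using g_mono[of u v] uv by simp
  ultimately show "yf u \<le> yf v" unfolding yf_def by simp
qed

lemma loc_right:
  assumes "0 \<le> \<tau>" "\<tau> \<le> v" "v \<le> T" "g v - g \<tau> \<le> 1/3"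
  shows "\<bar>yf v - yf \<tau> - yf \<tau> * (g v - g \<tau>)\<bar> \<le> 5 * Yb * (g v - g \<tau>)\<^sup>2"
proof -
  define D where "D = g v - g \<tau>"
  define h where "h = infsum f {\<tau><..v}"
  have D0: "0 \<le> D" using g_mono[of \<tau> v] assms D_def by simp
  have h: "0 \<le> h" "h \<le> 2 * D\<^sup>2" using H_inc[of \<tau> v] assms h_def D_def by simp_all
  have Hv: "Hf g v = Hf g \<tau> + h" using H_split[of \<tau> v] assms h_def by simp
  have yv: "yf v = yf \<tau> * exp (D + h)" unfolding yf_def Hv D_def by (simp flip: exp_add)
  note RA = right_arith[OF D0 _ h] 
  have "yf v - yf \<tau> - yf \<tau> * D = yf \<tau> * (exp (D + h) - 1 - D)" unfolding yv by (simp add: algebra_simps)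
  then have "\<bar>yf v - yf \<tau> - yf \<tau> * D\<bar> = yf \<tau> * (exp (D + h) - 1 - D)"
    using RA(1) assms D_def yf_pos[of \<tau>] by simp
  also have "\<dots> \<le> Yb * (5 * D\<^sup>2)"
    using RA assms D_def yf_le[of \<tau>] yf_pos[of \<tau>] by (intro mult_mono) simp_all
  finally show ?thesis unfolding D_def by simp
qed

lemma loc_left:
  assumes "0 \<le> u" "u < \<tau>" "\<tau> \<le> T" "Lim (at_left \<tau>) g - g u \<le> 1/3"
  shows "\<bar>yf \<tau> - yf u - yf \<tau> * (g \<tau> - g u)\<bar> \<le> 5 * Yb * (Lim (at_left \<tau>) g - g u) * (g \<tau> - g u)"
proof -
  define \<Delta> where "\<Delta> = jmp g \<tau>"
  define d where "d = Lim (at_left \<tau>) g - g u"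
  define k where "k = infsum f {u<..<\<tau>}"
  have tpos: "0 < \<tau>" using assms by simp
  have D: "0 \<le> \<Delta>" "\<Delta> \<le> 1/2" using jmp_bounds[OF tpos assms(3)] \<Delta>_def by simp_all
  have d: "0 \<le> d" "d \<le> 1/3" using gl_ge[OF assms(1-3)] assms d_def by simp_all
  have k: "0 \<le> k" "k \<le> 2 * d\<^sup>2" using H_left(2,3)[OF assms(1-3)] k_def d_def by simp_all
  have gsum: "g \<tau> - g u = \<Delta> + d" unfolding \<Delta>_def d_def jmp_def by simp
  have Ht: "Hf g \<tau> = Hf g u + (phi \<Delta> + k)"
    using H_split[of u \<tau>] H_left(1)[OF assms(1-3)] assms unfolding k_def \<Delta>_def f_def by simp
  have l: "exp (ln (1 - \<Delta>)) = 1 - \<Delta>" using D by simp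
  have eq: "g u - g 0 + Hf g u = (g \<tau> - g 0 + Hf g \<tau>) + ln (1 - \<Delta>) + (- (d + k))"
    using gsum Ht unfolding phi_def by simp
  have "yf u = exp ((g \<tau> - g 0 + Hf g \<tau>) + ln (1 - \<Delta>) + (- (d + k)))"
    unfolding yf_def by (simp only: eq)
  also have "\<dots> = exp (g \<tau> - g 0 + Hf g \<tau>) * exp (ln (1 - \<Delta>)) * exp (- (d + k))"
    by (simp only: exp_add)
  also have "\<dots> = yf \<tau> * ((1 - \<Delta>) * exp (- (d + k)))" unfolding l yf_def by simp
  finally have yu: "yf u = yf \<tau> * ((1 - \<Delta>) * exp (- (d + k)))" .
  have "yf \<tau> - yf u - yf \<tau> * (g \<tau> - g u) = yf \<tau> * (1 - \<Delta> - d - (1 - \<Delta>) * exp (- (d + k)))"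
    unfolding yu gsum by (simp add: algebra_simps)
  then have "\<bar>yf \<tau> - yf u - yf \<tau> * (g \<tau> - g u)\<bar> = yf \<tau> * \<bar>1 - \<Delta> - d - (1 - \<Delta>) * exp (- (d + k))\<bar>"
    using yf_pos[of \<tau>] by (simp add: abs_mult)
  also have "\<dots> \<le> Yb * (5 * d * (d + \<Delta>))"
    using left_arith[OF D d k] yf_le[of \<tau>] yf_pos[of \<tau>] assms by (intro mult_mono) simp_all
  also have "\<dots> = 5 * Yb * d * (g \<tau> - g u)" using gsum by (simp add: algebra_simps)
  finally show ?thesis unfolding d_def .
qed

end


context jsetup
begin

lemma yf_rcont:
  assumes t: "0 \<le> t" "t < T" and rc: "continuous (at_right t) g"
  shows "continuous (at_right t) yf"
proof -
  have gt: "(g \<longlongrightarrow> g t) (at_right t)" using rc by (simp add: continuous_within)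
  have ev: "eventually (\<lambda>v. v \<in> {t<..<T}) (at_right t)" using t by (intro eventually_at_right_real)
  have lo: "eventually (\<lambda>v. Hf g t \<le> Hf g v) (at_right t)"
    using ev
  proof (rule eventually_mono)
    fix v assume v: "v \<in> {t<..<T}"
    then show "Hf g t \<le> Hf g v" using H_split[of t v] H_inc(1)[of t v] t by simp
  qed
  have up: "eventually (\<lambda>v. Hf g v \<le> Hf g t + 2 * (g v - g t)\<^sup>2) (at_right t)"
    using ev
  proof (rule eventually_mono)
    fix v assume v: "v \<in> {t<..<T}"
    then show "Hf g v \<le> Hf g t + 2 * (g v - g t)\<^sup>2" using H_split[of t v] H_inc(2)[of t v] t by simp
  qed
  have "((\<lambda>v. Hf g t + 2 * (g v - g t)\<^sup>2) \<longlongrightarrow> Hf g t + 2 * (g t - g t)\<^sup>2) (at_right t)"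
    by (intro tendsto_intros gt)
  then have "((\<lambda>v. Hf g t + 2 * (g v - g t)\<^sup>2) \<longlongrightarrow> Hf g t) (at_right t)" by simp
  then have Ht: "(Hf g \<longlongrightarrow> Hf g t) (at_right t)"
    using tendsto_sandwich[OF lo up tendsto_const] by simp
  have "((\<lambda>v. exp (g v - g 0 + Hf g v)) \<longlongrightarrow> exp (g t - g 0 + Hf g t)) (at_right t)"
    by (intro tendsto_intros gt Ht)
  then have "(yf \<longlongrightarrow> yf t) (at_right t)" unfolding yf_def[abs_def] by simp
  then show ?thesis by (simp add: continuous_within)
qed

lemma yf_int:
  assumes rc: "\<forall>t\<in>{0..<T}. continuous (at_right t) g" and b: "0 \<le> b" "b \<le> T"
  shows "kurzweil_has_integral yf g 0 b (yf b - 1)"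
proof (cases "b = 0")
  case True
  show ?thesis unfolding kurzweil_has_integral_def
  proof (intro allI impI)
    fix \<epsilon> :: real assume "0 < \<epsilon>"
    have A: "\<forall>m t \<tau>. kurzweil_fine (\<lambda>_. 1) 0 b m t \<tau> \<longrightarrow>
             \<bar>yf b - 1 - (\<Sum>j = 1..m. yf (\<tau> j) * (g (t j) - g (t (j - 1))))\<bar> < \<epsilon>"
    proof (intro allI impI)
      fix m t \<tau> assume "kurzweil_fine (\<lambda>_. 1) 0 b m t \<tau>"
      then have "m = 0" using kf_zero_len True by blast
      then show "\<bar>yf b - 1 - (\<Sum>j = 1..m. yf (\<tau> j) * (g (t j) - g (t (j - 1))))\<bar> < \<epsilon>"
        using True yf0 \<open>0 < \<epsilon>\<close> by simp
    qed
    have B: "\<forall>s\<in>{0..b}. 0 < (\<lambda>_. 1::real) s" by simp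
    from B A show "\<exists>\<delta>. (\<forall>s\<in>{0..b}. 0 < \<delta> s) \<and> (\<forall>m t \<tau>. kurzweil_fine \<delta> 0 b m t \<tau> \<longrightarrow>
             \<bar>yf b - 1 - (\<Sum>j = 1..m. yf (\<tau> j) * (g (t j) - g (t (j - 1))))\<bar> < \<epsilon>)"
      by (intro exI[of _ "\<lambda>_. 1::real"] conjI) (simp, rule A)
  qed
next
  case False
  then have b0: "0 < b" using b by simp
  have T0: "0 < T" using b0 b by simp
  show ?thesis unfolding kurzweil_has_integral_def
  proof (intro allI impI)
    fix \<epsilon> :: real assume e: "0 < \<epsilon>"
    have gT: "g 0 \<le> g T" using g_mono[of 0 T] T0 by simp
    define \<eta> where "\<eta> = \<epsilon> / (g T - g 0 + 1)"
    have eta: "0 < \<eta>" unfolding \<eta>_def using e gT by simp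
    have Yb1: "1 \<le> Yb" unfolding Yb_def using gT by simp
    define \<theta> where "\<theta> = min (1/3) (\<eta> / (5 * Yb))"
    have th0: "0 < \<theta>" unfolding \<theta>_def using eta Yb1 by simp
    have th1: "\<theta> \<le> 1/3" unfolding \<theta>_def by (rule min.cobounded1)
    have th2: "\<theta> \<le> \<eta> / (5 * Yb)" unfolding \<theta>_def by (rule min.cobounded2)
    have th3: "5 * Yb * \<theta> \<le> \<eta>" using th2 Yb1 by (simp add: field_simps)
    have ex: "\<exists>\<delta>>0. (\<tau> < T \<longrightarrow> (\<forall>v. \<tau> < v \<and> v < \<tau> + \<delta> \<longrightarrow> g v - g \<tau> < \<theta>)) \<and>
                     (0 < \<tau> \<longrightarrow> (\<forall>u. \<tau> - \<delta> < u \<and> u < \<tau> \<longrightarrow> Lim (at_left \<tau>) g - g u < \<theta>))"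
      if \<tau>: "\<tau> \<in> {0..b}" for \<tau>
    proof -
      obtain \<delta>1 where d1: "\<delta>1 > 0" "\<tau> < T \<longrightarrow> (\<forall>v. \<tau> < v \<and> v < \<tau> + \<delta>1 \<longrightarrow> g v - g \<tau> < \<theta>)"
      proof (cases "\<tau> < T")
        case True
        have "(g \<longlongrightarrow> g \<tau>) (at_right \<tau>)" using rc True \<tau> by (simp add: continuous_within)
        then have "eventually (\<lambda>v. dist (g v) (g \<tau>) < \<theta>) (at_right \<tau>)" using th0 by (rule tendstoD)
        then obtain b' where b': "b' > \<tau>" "\<forall>y>\<tau>. y < b' \<longrightarrow> dist (g y) (g \<tau>) < \<theta>"
          unfolding eventually_at_right_field by blast
        have "\<forall>v. \<tau> < v \<and> v < \<tau> + (b' - \<tau>) \<longrightarrow> g v - g \<tau> < \<theta>"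
        proof (intro allI impI)
          fix v assume "\<tau> < v \<and> v < \<tau> + (b' - \<tau>)"
          then have "dist (g v) (g \<tau>) < \<theta>" using b' by simp
          then show "g v - g \<tau> < \<theta>" by (simp add: dist_real_def abs_less_iff)
        qed
        then show ?thesis using that[of "b' - \<tau>"] b' by simp
      next
        case False then show ?thesis using that[of 1] by simp
      qed
      obtain \<delta>2 where d2: "\<delta>2 > 0" "0 < \<tau> \<longrightarrow> (\<forall>u. \<tau> - \<delta>2 < u \<and> u < \<tau> \<longrightarrow> Lim (at_left \<tau>) g - g u < \<theta>)"
      proof (cases "0 < \<tau>")
        case True
        have tT: "\<tau> \<le> T" using \<tau> b by simp
        obtain u0 where u0: "u0 \<in> {0..<\<tau>}" "Lim (at_left \<tau>) g - \<theta> < g u0"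
          using left_lim(4)[OF mono True tT] th0 by blast
        have "\<forall>u. \<tau> - (\<tau> - u0) < u \<and> u < \<tau> \<longrightarrow> Lim (at_left \<tau>) g - g u < \<theta>"
        proof (intro allI impI)
          fix u assume u: "\<tau> - (\<tau> - u0) < u \<and> u < \<tau>"
          have "g u0 \<le> g u" using g_mono[of u0 u] u u0 tT by simp
          then show "Lim (at_left \<tau>) g - g u < \<theta>" using u0 by simp
        qed
        then show ?thesis using that[of "\<tau> - u0"] u0 by simp
      next
        case False then show ?thesis using that[of 1] by simp
      qed
      define \<delta> where "\<delta> = min \<delta>1 \<delta>2"
      have "\<delta> > 0" unfolding \<delta>_def using d1 d2 by simp
      moreover have "\<delta> \<le> \<delta>1" unfolding \<delta>_def by (rule min.cobounded1)
      moreover have "\<delta> \<le> \<delta>2" unfolding \<delta>_def by (rule min.cobounded2)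
      ultimately show ?thesis using d1 d2 by (intro exI[of _ \<delta>]) force
    qed
    then have "\<forall>\<tau>\<in>{0..b}. \<exists>\<delta>>0. (\<tau> < T \<longrightarrow> (\<forall>v. \<tau> < v \<and> v < \<tau> + \<delta> \<longrightarrow> g v - g \<tau> < \<theta>)) \<and>
                     (0 < \<tau> \<longrightarrow> (\<forall>u. \<tau> - \<delta> < u \<and> u < \<tau> \<longrightarrow> Lim (at_left \<tau>) g - g u < \<theta>))" by blast
    then obtain \<delta> where d: "\<forall>\<tau>\<in>{0..b}. \<delta> \<tau> > 0 \<and> (\<tau> < T \<longrightarrow> (\<forall>v. \<tau> < v \<and> v < \<tau> + \<delta> \<tau> \<longrightarrow> g v - g \<tau> < \<theta>)) \<and>
                     (0 < \<tau> \<longrightarrow> (\<forall>u. \<tau> - \<delta> \<tau> < u \<and> u < \<tau> \<longrightarrow> Lim (at_left \<tau>) g - g u < \<theta>))"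
      by (metis (no_types, lifting) bchoice)
    show "\<exists>\<delta>. (\<forall>s\<in>{0..b}. 0 < \<delta> s) \<and>
          (\<forall>m t \<tau>. kurzweil_fine \<delta> 0 b m t \<tau> \<longrightarrow>
             \<bar>yf b - 1 - (\<Sum>j = 1..m. yf (\<tau> j) * (g (t j) - g (t (j - 1))))\<bar> < \<epsilon>)"
    proof (intro exI[of _ \<delta>] conjI allI impI)
      show "\<forall>s\<in>{0..b}. 0 < \<delta> s" using d by blast
      fix m tt \<tau> assume P: "kurzweil_fine \<delta> 0 b m tt \<tau>"
      have loc: "\<bar>yf (tt j) - yf (tt (j-1)) - yf (\<tau> j) * (g (tt j) - g (tt (j-1)))\<bar> \<le> \<eta> * (g (tt j) - g (tt (j-1)))"
        if j: "j \<in> {1..m}" for j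
      proof -
        note TT = kf_tag[OF P j]
        define u where "u = tt (j-1)"
        define v where "v = tt j"
        define s where "s = \<tau> j"
        have jm: "j - 1 \<le> m" "j \<le> m" using j by auto
        have u0: "0 \<le> u" using kf_range(1)[OF P jm(1)] u_def by simp
        have vb: "v \<le> b" using kf_range(2)[OF P jm(2)] v_def by simp
        have us: "u \<le> s" "s \<le> v" using TT u_def v_def s_def by simp_all
        have sb: "s \<in> {0..b}" using TT s_def by simp
        have dl: "s - \<delta> s < u" "v < s + \<delta> s" using TT u_def v_def s_def by simp_all
        have R: "\<bar>yf v - yf s - yf s * (g v - g s)\<bar> \<le> \<eta> * (g v - g s)"
        proof (cases "s = v")
          case True then show ?thesis by simp
        next
          case False
          then have sv: "s < v" using us by simp
          then have sT: "s < T" using vb b by simp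
          have "g v - g s < \<theta>" using d sb sT sv dl by blast
          then have D1: "g v - g s \<le> 1/3" using th1 by simp
          have D0: "0 \<le> g v - g s" using g_mono[of s v] us u0 vb b by simp
          have "\<bar>yf v - yf s - yf s * (g v - g s)\<bar> \<le> 5 * Yb * (g v - g s)\<^sup>2"
            using loc_right[of s v] us u0 vb b D1 by simp
          also have "\<dots> = (5 * Yb * (g v - g s)) * (g v - g s)" by (simp add: power2_eq_square)
          also have "\<dots> \<le> (5 * Yb * \<theta>) * (g v - g s)"
            using \<open>g v - g s < \<theta>\<close> D0 Yb1 by (intro mult_right_mono) simp_all
          also have "\<dots> \<le> \<eta> * (g v - g s)" using th3 D0 by (intro mult_right_mono) simp_all
          finally show ?thesis .
        qed
        have L: "\<bar>yf s - yf u - yf s * (g s - g u)\<bar> \<le> \<eta> * (g s - g u)"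
        proof (cases "u = s")
          case True then show ?thesis by simp
        next
          case False
          then have us': "u < s" using us by simp
          then have s0: "0 < s" using u0 by simp
          have sT: "s \<le> T" using sb b by simp
          have dth: "Lim (at_left s) g - g u < \<theta>" using d sb s0 us' dl by blast
          then have d1: "Lim (at_left s) g - g u \<le> 1/3" using th1 by simp
          have d0: "0 \<le> Lim (at_left s) g - g u" using gl_ge[OF u0 us' sT] by simp
          have G0: "0 \<le> g s - g u" using g_mono[of u s] us u0 sT by simp
          have "\<bar>yf s - yf u - yf s * (g s - g u)\<bar> \<le> 5 * Yb * (Lim (at_left s) g - g u) * (g s - g u)"
            using loc_left[OF u0 us' sT d1] .
          also have "\<dots> \<le> (5 * Yb * \<theta>) * (g s - g u)"
            using dth d0 G0 Yb1 by (intro mult_right_mono) simp_all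
          also have "\<dots> \<le> \<eta> * (g s - g u)" using th3 G0 by (intro mult_right_mono) simp_all
          finally show ?thesis .
        qed
        have "yf v - yf u - yf s * (g v - g u) =
              (yf v - yf s - yf s * (g v - g s)) + (yf s - yf u - yf s * (g s - g u))"
          by (simp add: algebra_simps)
        then have "\<bar>yf v - yf u - yf s * (g v - g u)\<bar> \<le> \<eta> * (g v - g s) + \<eta> * (g s - g u)"
          using R L by linarith
        also have "\<dots> = \<eta> * (g v - g u)" by (simp add: algebra_simps)
        finally show ?thesis unfolding u_def v_def s_def .
      qed
      have tel1: "(\<Sum>j=1..m. yf (tt j) - yf (tt (j-1))) = yf b - 1"
        using telescope[of "\<lambda>j. yf (tt j)" m] P yf0 unfolding kurzweil_fine_def by simp
      have tel2: "(\<Sum>j=1..m. g (tt j) - g (tt (j-1))) = g b - g 0"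
        using telescope[of "\<lambda>j. g (tt j)" m] P unfolding kurzweil_fine_def by simp
      have "yf b - 1 - (\<Sum>j = 1..m. yf (\<tau> j) * (g (tt j) - g (tt (j - 1)))) =
            (\<Sum>j=1..m. yf (tt j) - yf (tt (j-1)) - yf (\<tau> j) * (g (tt j) - g (tt (j-1))))"
        unfolding tel1[symmetric] by (simp only: sum_subtractf)
      then have "\<bar>yf b - 1 - (\<Sum>j = 1..m. yf (\<tau> j) * (g (tt j) - g (tt (j - 1))))\<bar> \<le>
            (\<Sum>j=1..m. \<bar>yf (tt j) - yf (tt (j-1)) - yf (\<tau> j) * (g (tt j) - g (tt (j-1)))\<bar>)"
        by (simp only: sum_abs)
      also have "\<dots> \<le> (\<Sum>j=1..m. \<eta> * (g (tt j) - g (tt (j-1))))" using loc by (rule sum_mono)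
      also have "\<dots> = \<eta> * (g b - g 0)" unfolding tel2[symmetric] by (simp add: sum_distrib_left)
      also have "\<dots> \<le> \<eta> * (g T - g 0)" using g_mono[of b T] b eta by (intro mult_left_mono) simp_all
      also have "\<dots> < \<epsilon>"
      proof -
        have "\<eta> * (g T - g 0) = \<epsilon> * ((g T - g 0) / (g T - g 0 + 1))" unfolding \<eta>_def by simp
        also have "\<dots> < \<epsilon> * 1" using e gT by (intro mult_strict_left_mono) simp_all
        finally show ?thesis by simp
      qed
      finally show "\<bar>yf b - 1 - (\<Sum>j = 1..m. yf (\<tau> j) * (g (tt j) - g (tt (j - 1))))\<bar> < \<epsilon>" .
    qed
  qed
qed

end


theorem lemmaA10:
  fixes T :: real and g :: "real \<Rightarrow> real"
  assumes "T > 0"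
    and "mono_on {0..T} g"
    and "\<forall>t\<in>{0..<T}. continuous (at_right t) g"
    and "\<forall>t\<in>{0<..T}. g t - Lim (at_left t) g \<le> 1/2"
  shows "\<exists>y. ((\<forall>t\<in>{0..T}. y t \<ge> 1) \<and> mono_on {0..T} y \<and>
              (\<forall>t\<in>{0..<T}. continuous (at_right t) y) \<and>
              (\<forall>t\<in>{0..T}. kurzweil_has_integral y g 0 t (y t - 1)))
           \<and> (\<forall>z. ((\<forall>t\<in>{0..T}. z t \<ge> 1) \<and> mono_on {0..T} z \<and>
                    (\<forall>t\<in>{0..<T}. continuous (at_right t) z) \<and>
                    (\<forall>t\<in>{0..T}. kurzweil_has_integral z g 0 t (z t - 1)))
                   \<longrightarrow> (\<forall>t\<in>{0..T}. z t = y t))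
           \<and> (\<forall>t\<in>{0..T}. y t \<le> exp (2 * (g T - g 0)))"
proof -
  interpret J: jsetup g T using assms(2,4) by unfold_locales
  let ?y = "J.yf"
  have P1: "(\<forall>t\<in>{0..T}. ?y t \<ge> 1) \<and> mono_on {0..T} ?y \<and>
              (\<forall>t\<in>{0..<T}. continuous (at_right t) ?y) \<and>
              (\<forall>t\<in>{0..T}. kurzweil_has_integral ?y g 0 t (?y t - 1))"
  proof (intro conjI ballI)
    fix t assume "t \<in> {0..T}" then show "?y t \<ge> 1" using J.yf_ge1 by simp
  next
    show "mono_on {0..T} ?y" by (rule J.yf_mono)
  next
    fix t assume "t \<in> {0..<T}" then show "continuous (at_right t) ?y"
      using J.yf_rcont assms(3) by simp
  next
    fix t assume "t \<in> {0..T}" then show "kurzweil_has_integral ?y g 0 t (?y t - 1)"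
      using J.yf_int assms(3) by simp
  qed
  have P2: "\<forall>z. ((\<forall>t\<in>{0..T}. z t \<ge> 1) \<and> mono_on {0..T} z \<and>
                    (\<forall>t\<in>{0..<T}. continuous (at_right t) z) \<and>
                    (\<forall>t\<in>{0..T}. kurzweil_has_integral z g 0 t (z t - 1)))
                   \<longrightarrow> (\<forall>t\<in>{0..T}. z t = ?y t)"
  proof (intro allI impI)
    fix z assume z: "(\<forall>t\<in>{0..T}. z t \<ge> 1) \<and> mono_on {0..T} z \<and>
                    (\<forall>t\<in>{0..<T}. continuous (at_right t) z) \<and>
                    (\<forall>t\<in>{0..T}. kurzweil_has_integral z g 0 t (z t - 1))"
    define w where "w x = z x - ?y x" for x
    have wint: "\<forall>t\<in>{0..T}. kurzweil_has_integral w g 0 t (w t)"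
    proof
      fix t assume t: "t \<in> {0..T}"
      have "kurzweil_has_integral (\<lambda>x. z x - ?y x) g 0 t ((z t - 1) - (?y t - 1))"
        using z t P1 by (intro kint_diff) simp_all
      moreover have "(\<lambda>x. z x - ?y x) = w" unfolding w_def by simp
      moreover have "(z t - 1) - (?y t - 1) = w t" unfolding w_def by simp
      ultimately show "kurzweil_has_integral w g 0 t (w t)" by simp
    qed
    have wb: "\<forall>x\<in>{0..T}. \<bar>w x\<bar> \<le> z T + J.Yb"
    proof
      fix x assume x: "x \<in> {0..T}"
      have zm: "mono_on {0..T} z" using z by simp
      have "z x \<le> z T" using x assms(1) by (intro mono_onD[OF zm]) simp_all
      moreover have "1 \<le> z x" "1 \<le> ?y x" "?y x \<le> J.Yb" using z x J.yf_ge1 J.yf_le by simp_all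
      ultimately show "\<bar>w x\<bar> \<le> z T + J.Yb" unfolding w_def by simp
    qed
    have "\<forall>x\<in>{0..T}. w x = 0"
      using uniq_core[OF assms(2) assms(3) assms(4) wint wb] assms(1) by simp
    then show "\<forall>t\<in>{0..T}. z t = ?y t" unfolding w_def by simp
  qed
  have P3: "\<forall>t\<in>{0..T}. ?y t \<le> exp (2 * (g T - g 0))"
    using J.yf_le unfolding J.Yb_def by simp
  show ?thesis using P1 P2 P3 by blast
qed


end
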